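(* Consider an $N$-player episodic Markov game in which all agents run the BM-OFTRL algorithm with smooth value updates described in the context. For every $(h,t)\in[H]\times[T]$, \[ \delta_h^t \leq \sum_{j=1}^t \alpha_t^j\, \delta_{h+1}^j + \operatorname{SwapReg}_h^t. \]
   Context: Markov game: $N$ agents $\mathcal{N}=\{1,\dots,N\}$, horizon $H$, finite state space $\mathcal{S}$, finite action sets $\mathcal{A}_i$ ($A_i=|\mathcal A_i|$), joint action space $\mathcal{A}_{\mathrm{all}}=\prod_i\mathcal{A}_i$, rewards $r_{h,i}:\mathcal{S}\times\mathcal{A}_{\mathrm{all}}\to[0,1]$, transitions $P_h(\cdot\mid s,\bm a)$. For a (possibly correlated, non-Markov) policy $\pi$ acting from step $h$, $V^\pi_{h,i}(s)$ is the expected sum of agent $i$'s rewards from step $h$ to $H$ given $s_h=s$; all values at step $H+1$ are $0$. Notation: $[Q\pi_{h,-i}](s,a_i)=\sum_{\bm a_{-i}}Q(s,a_i,\bm a_{-i})\prod_{k\ne i}\pi_{h,k}(s,a_k)$, $[Q\pi_h](s)=\sum_{\bm a}Q(s,\bm a)\prod_k\pi_{h,k}(s,a_k)$, $P_h[V](s,\bm a)=\mathbb E_{s'\sim P_h(\cdot\mid s,\bm a)}V(s')$. Weights: $\alpha_t=\frac{H+1}{H+t}$, $\alpha_t^j=\alpha_j\prod_{j'=j+1}^t(1-\alpha_{j'})$ ($1\le j\le t$); at iteration $t$, $w_j=\alpha_t^j/\alpha_t^1$. Algorithm (agent $i$; all agents run it), learning rate $\eta>0$, log-barrier $\mathcal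 R(\bm x)=-\sum_a\log\bm x[a]$. Initialize $Q^0_{h,i}\equiv0$, $\pi^0_{h,i}(s,\cdot)$ uniform, $Q^t_{H+1,i}\equiv0$. For $t=1,\dots,T$: for all $s,h$, $a_i$: $\ell^{t,a_i}_{h,i}(s,a_i')=\sum_{j=1}^{t-1}w_j\pi^j_{h,i}(s,a_i)[Q^j_{h,i}\pi^j_{h,-i}](s,a_i')+w_t\pi^{t-1}_{h,i}(s,a_i)[Q^{t-1}_{h,i}\pi^{t-1}_{h,-i}](s,a_i')$, $q^{t,a_i}_{h,i}(s,\cdot)=\arg\max_{\bm x\in\Delta(\mathcal A_i)}\{\langle\bm x,\eta\ell^{t,a_i}_{h,i}(s,\cdot)/w_t\rangle-\mathcal R(\bm x)\}$, and $\pi^t_{h,i}(s,\cdot)$ is a distribution with $\pi^t_{h,i}(s,\cdot)=\sum_{a_i}\pi^t_{h,i}(s,a_i)q^{t,a_i}_{h,i}(s,\cdot)$. Then for $h=H,\dots,1$: $Q^t_{h,i}(s,\bm a)=(1-\alpha_t)Q^{t-1}_{h,i}(s,\bm a)+\alpha_t\big(r_{h,i}(s,\bm a)+P_h[\,[Q^t_{h+1,i}\pi^t_{h+1}]\,](s,\bm a)\big)$. Correlated policy $\bar\pi^t_h$ (acting from step $h$): for $h'=h,\dots,H$, sample $\tau\in[t]$ with $\mathbb P(\tau=j)=\alpha^j_t$ (shared randomness), all agents play the product policy $\pi^\tau_{h'}$ at step $h'$, set $t\leftarrow\tau$. Strategy modification for agent $i$ effective from step $h$: $\phi_i=\{\phi^s_{h',i}:\mathcal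 A_i\to\mathcal A_i\}_{h'\ge h,s}$; $\phi_i\diamond\pi$ replaces agent $i$'s recommended action $a_i$ at step $h'$, state $s$ by $\phi^s_{h',i}(a_i)$. Definitions: $\delta_h^t=\max_{i\in\mathcal N}\max_{\phi_i}\max_{s\in\mathcal S}\big(V^{\phi_i\diamond\bar\pi^t_h}_{h,i}(s)-V^{\bar\pi^t_h}_{h,i}(s)\big)$, with $\delta^t_{H+1}=0$; $\operatorname{SwapReg}^t_{h,i}(s)=\max_{\phi^s_{h,i}:\mathcal A_i\to\mathcal A_i}\sum_{j=1}^t\alpha^j_t\langle\phi^s_{h,i}\diamond\pi^j_{h,i}(s,\cdot)-\pi^j_{h,i}(s,\cdot),[Q^j_{h,i}\pi^j_{h,-i}](s,\cdot)\rangle$, where $\phi\diamond\bm x$ is the distribution of $\phi(a)$ for $a\sim\bm x$; $\operatorname{SwapReg}^t_h=\max_i\max_s\operatorname{SwapReg}^t_{h,i}(s)$. *)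

theory Defs
  imports "HOL-Probability.Probability_Mass_Function"
begin

definition alpha :: "nat \<Rightarrow> nat \<Rightarrow> real" where
  "alpha H t = (real H + 1) / (real H + real t)"

definition alphaw :: "nat \<Rightarrow> nat \<Rightarrow> nat \<Rightarrow> real" where
  "alphaw H t j = alpha H j * (\<Prod>j'\<in>{j+1..t}. (1 - alpha H j'))"

definition wgt :: "nat \<Rightarrow> nat \<Rightarrow> nat \<Rightarrow> real" where
  "wgt H t j = alphaw H t j / alphaw H t 1"

definition joint :: "('i \<Rightarrow> 'a set) \<Rightarrow> ('i \<Rightarrow> 'a) set" where
  "joint A = {a. \<forall>k. a k \<in> A k}"

definition margQ ::
  "('i \<Rightarrow> 'a set) \<Rightarrow> (nat \<Rightarrow> nat \<Rightarrow> 'i \<Rightarrow> 's \<Rightarrow> 'a \<Rightarrow> real) \<Rightarrow>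
   (nat \<Rightarrow> nat \<Rightarrow> 'i \<Rightarrow> 's \<Rightarrow> ('i \<Rightarrow> 'a) \<Rightarrow> real) \<Rightarrow> nat \<Rightarrow> nat \<Rightarrow> 'i \<Rightarrow> 's \<Rightarrow> 'a \<Rightarrow> real" where
  "margQ A pol Q j h i s b =
     (\<Sum>a\<in>{a\<in>joint A. a i = b}. Q j h i s a * (\<Prod>k\<in>-{i}. pol j h k s (a k)))"

definition fullQ ::
  "('i::finite \<Rightarrow> 'a set) \<Rightarrow> (nat \<Rightarrow> nat \<Rightarrow> 'i \<Rightarrow> 's \<Rightarrow> 'a \<Rightarrow> real) \<Rightarrow>
   (nat \<Rightarrow> nat \<Rightarrow> 'i \<Rightarrow> 's \<Rightarrow> ('i \<Rightarrow> 'a) \<Rightarrow> real) \<Rightarrow> nat \<Rightarrow> nat \<Rightarrow> 'i \<Rightarrow> 's \<Rightarrow> real" where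
  "fullQ A pol Q j h i s =
     (\<Sum>a\<in>joint A. Q j h i s a * (\<Prod>k\<in>UNIV. pol j h k s (a k)))"

definition isdist :: "'a set \<Rightarrow> ('a \<Rightarrow> real) \<Rightarrow> bool" where
  "isdist B x \<longleftrightarrow> (\<forall>b\<in>B. x b \<ge> 0) \<and> (\<forall>b. b \<notin> B \<longrightarrow> x b = 0) \<and> sum x B = 1"

(* distribution on B with full support (the domain of the log-barrier) *)
definition posdist :: "'a set \<Rightarrow> ('a \<Rightarrow> real) \<Rightarrow> bool" where
  "posdist B x \<longleftrightarrow> (\<forall>b\<in>B. x b > 0) \<and> (\<forall>b. b \<notin> B \<longrightarrow> x b = 0) \<and> sum x B = 1"

definition loss ::
  "('i \<Rightarrow> 'a set) \<Rightarrow> nat \<Rightarrow> (nat \<Rightarrow> nat \<Rightarrow> 'i \<Rightarrow> 's \<Rightarrow> 'a \<Rightarrow> real) \<Rightarrow>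
   (nat \<Rightarrow> nat \<Rightarrow> 'i \<Rightarrow> 's \<Rightarrow> ('i \<Rightarrow> 'a) \<Rightarrow> real) \<Rightarrow> nat \<Rightarrow> nat \<Rightarrow> 'i \<Rightarrow> 's \<Rightarrow> 'a \<Rightarrow> 'a \<Rightarrow> real" where
  "loss A H pol Q t h i s b b' =
     (\<Sum>j\<in>{1..t-1}. wgt H t j * pol j h i s b * margQ A pol Q j h i s b')
     + wgt H t t * pol (t-1) h i s b * margQ A pol Q (t-1) h i s b'"

definition ftrl_obj ::
  "'a set \<Rightarrow> real \<Rightarrow> real \<Rightarrow> ('a \<Rightarrow> real) \<Rightarrow> ('a \<Rightarrow> real) \<Rightarrow> real" where
  "ftrl_obj B eta wt l x = (\<Sum>b\<in>B. x b * (eta * l b / wt)) + (\<Sum>b\<in>B. ln (x b))"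

(* dev h s a : the joint action actually played at step h, state s, when a is recommended.
   vaux n h t s : value for agent i from step h with n remaining steps, latent counter t. *)
primrec vaux ::
  "('i::finite \<Rightarrow> 'a set) \<Rightarrow> (nat \<Rightarrow> 'i \<Rightarrow> 's::finite \<Rightarrow> ('i \<Rightarrow> 'a) \<Rightarrow> real) \<Rightarrow>
   (nat \<Rightarrow> 's \<Rightarrow> ('i \<Rightarrow> 'a) \<Rightarrow> 's pmf) \<Rightarrow> nat \<Rightarrow> (nat \<Rightarrow> nat \<Rightarrow> 'i \<Rightarrow> 's \<Rightarrow> 'a \<Rightarrow> real) \<Rightarrow>
   (nat \<Rightarrow> 's \<Rightarrow> ('i \<Rightarrow> 'a) \<Rightarrow> ('i \<Rightarrow> 'a)) \<Rightarrow> 'i \<Rightarrow> nat \<Rightarrow> nat \<Rightarrow> nat \<Rightarrow> 's \<Rightarrow> real" where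
  "vaux A r P H pol dev i 0 h t s = 0"
| "vaux A r P H pol dev i (Suc n) h t s =
     (\<Sum>\<tau>\<in>{1..t}. alphaw H t \<tau> *
        (\<Sum>a\<in>joint A. (\<Prod>k\<in>UNIV. pol \<tau> h k s (a k)) *
           (r h i s (dev h s a) +
            (\<Sum>s'\<in>UNIV. pmf (P h s (dev h s a)) s' * vaux A r P H pol dev i n (Suc h) \<tau> s'))))"

definition Vbar where
  "Vbar A r P H pol dev i h t s = vaux A r P H pol dev i (Suc H - h) h t s"

definition modif :: "'i \<Rightarrow> (nat \<Rightarrow> 's \<Rightarrow> 'a \<Rightarrow> 'a) \<Rightarrow> nat \<Rightarrow> 's \<Rightarrow> ('i \<Rightarrow> 'a) \<Rightarrow> ('i \<Rightarrow> 'a)" where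
  "modif i phi h s a = a(i := phi h s (a i))"

definition delta where
  "delta A r P H pol h t =
     Sup {Vbar A r P H pol (modif i phi) i h t s - Vbar A r P H pol (\<lambda>h s a. a) i h t s
          | i phi s. \<forall>h' s' b. b \<in> A i \<longrightarrow> phi h' s' b \<in> A i}"

definition swapreg_i where
  "swapreg_i A H pol Q h t i s =
     Sup {(\<Sum>j\<in>{1..t}. alphaw H t j *
            (\<Sum>b\<in>A i. pol j h i s b * (margQ A pol Q j h i s (phi b) - margQ A pol Q j h i s b)))
          | phi. \<forall>b\<in>A i. phi b \<in> A i}"

definition swapreg where
  "swapreg A H pol Q h t = Sup {swapreg_i A H pol Q h t i s | i s. True}"

end

theory Submission
  imports Defs
begin


lemma joint_PiE: "joint (A::'i::finite \<Rightarrow> 'a set) = PiE UNIV A"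
  unfolding joint_def PiE_def Pi_def extensional_def by auto

lemma finite_joint: "(\<And>i. finite (A i)) \<Longrightarrow> finite (joint (A::'i::finite \<Rightarrow> 'a set))"
  unfolding joint_PiE by (intro finite_PiE) auto

lemma sum_prod_joint:
  fixes A :: "'i::finite \<Rightarrow> 'a set"
  assumes "\<And>i. finite (A i)"
  shows "(\<Sum>a\<in>joint A. \<Prod>k\<in>UNIV. p k (a k)) = (\<Prod>k\<in>UNIV. \<Sum>b\<in>A k. (p k b::real))"
  unfolding joint_PiE using prod_sum_PiE[of UNIV A p] assms by simp

lemma sum_prod_joint_1:
  fixes A :: "'i::finite \<Rightarrow> 'a set"
  assumes "\<And>i. finite (A i)" "\<And>k. isdist (A k) (p k)"
  shows "(\<Sum>a\<in>joint A. \<Prod>k\<in>UNIV. p k (a k)) = 1"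
  using sum_prod_joint[OF assms(1), of p] assms(2) unfolding isdist_def by simp

lemma prod_joint_nonneg:
  assumes "\<And>k. isdist (A k) (p k)" "a \<in> joint A"
  shows "0 \<le> (\<Prod>k\<in>UNIV. (p k (a k)::real))"
  using assms unfolding isdist_def joint_def by (intro prod_nonneg) auto

lemma alpha_nonneg: "0 \<le> alpha H j" unfolding alpha_def by simp
lemma one_minus_alpha_nonneg: "1 \<le> j \<Longrightarrow> 0 \<le> 1 - alpha H j" unfolding alpha_def by (simp add: divide_le_eq_1)
lemma alpha_1: "alpha H 1 = 1" unfolding alpha_def by simp
lemma alpha_le1: "1 \<le> j \<Longrightarrow> alpha H j \<le> 1" unfolding alpha_def by (simp add: divide_le_eq_1)

lemma alphaw_nonneg: "1 \<le> j \<Longrightarrow> 0 \<le> alphaw H t j"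
  unfolding alphaw_def by (intro mult_nonneg_nonneg alpha_nonneg prod_nonneg) (auto intro: alpha_le1)

lemma alphaw_Suc: "m \<le> t \<Longrightarrow> alphaw H (Suc t) m = (1 - alpha H (Suc t)) * alphaw H t m"
  unfolding alphaw_def by (simp add: prod.cl_ivl_Suc)

lemma alphaw_diag: "alphaw H t t = alpha H t"
  unfolding alphaw_def by simp

lemma alphaw_sum: "1 \<le> t \<Longrightarrow> (\<Sum>j\<in>{1..t}. alphaw H t j) = 1"
proof (induction t)
  case 0 then show ?case by simp
next
  case (Suc t)
  show ?case
  proof (cases "t = 0")
    case True then show ?thesis using alphaw_diag[of H 1] alpha_1[of H] by simp
  next
    case False
    have "(\<Sum>j\<in>{1..Suc t}. alphaw H (Suc t) j) = (\<Sum>j\<in>{1..t}. alphaw H (Suc t) j) + alpha H (Suc t)"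
      by (simp add: sum.cl_ivl_Suc alphaw_diag)
    also have "(\<Sum>j\<in>{1..t}. alphaw H (Suc t) j) = (1 - alpha H (Suc t)) * (\<Sum>j\<in>{1..t}. alphaw H t j)"
      by (simp add: sum_distrib_left alphaw_Suc)
    finally show ?thesis using Suc False by simp
  qed
qed

lemma swap_sum:
  fixes A :: "'i::finite \<Rightarrow> 'a set" and p :: "'i \<Rightarrow> 'a \<Rightarrow> real"
  assumes fin: "\<And>i. finite (A i)" and phi: "\<And>b. b \<in> A i \<Longrightarrow> f b \<in> A i"
  shows "(\<Sum>a\<in>joint A. (\<Prod>k\<in>UNIV. p k (a k)) * g (a(i := f (a i))))
     = (\<Sum>b\<in>A i. p i b * (\<Sum>a\<in>{a\<in>joint A. a i = f b}. g a * (\<Prod>k\<in>-{i}. p k (a k))))"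
proof -
  have "(\<Sum>a\<in>joint A. (\<Prod>k\<in>UNIV. p k (a k)) * g (a(i := f (a i))))
     = (\<Sum>b\<in>A i. \<Sum>a\<in>{a\<in>joint A. a i = b}. (\<Prod>k\<in>UNIV. p k (a k)) * g (a(i := f (a i))))"
    by (rule sum.group[symmetric]) (use finite_joint[of A, OF fin] fin in \<open>auto simp: joint_def\<close>)
  also have "\<dots> = (\<Sum>b\<in>A i. p i b * (\<Sum>a\<in>{a\<in>joint A. a i = f b}. g a * (\<Prod>k\<in>-{i}. p k (a k))))"
  proof (rule sum.cong[OF refl])
    fix b assume b: "b \<in> A i"
    have "(\<Sum>a\<in>{a\<in>joint A. a i = b}. (\<Prod>k\<in>UNIV. p k (a k)) * g (a(i := f (a i))))
        = (\<Sum>a\<in>{a\<in>joint A. a i = b}. p i b * (g (a(i := f b)) * (\<Prod>k\<in>-{i}. p k (a k))))"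
    proof (rule sum.cong[OF refl])
      fix a assume "a \<in> {a\<in>joint A. a i = b}"
      then have ai: "a i = b" by simp
      have "(\<Prod>k\<in>UNIV. p k (a k)) = p i (a i) * (\<Prod>k\<in>UNIV - {i}. p k (a k))"
        by (rule prod.remove) auto
      moreover have "UNIV - {i} = - {i}" by auto
      ultimately show "(\<Prod>k\<in>UNIV. p k (a k)) * g (a(i := f (a i))) = p i b * (g (a(i := f b)) * (\<Prod>k\<in>-{i}. p k (a k)))"
        using ai by simp
    qed
    also have "\<dots> = p i b * (\<Sum>a\<in>{a\<in>joint A. a i = b}. g (a(i := f b)) * (\<Prod>k\<in>-{i}. p k (a k)))"
      by (simp add: sum_distrib_left)
    also have "(\<Sum>a\<in>{a\<in>joint A. a i = b}. g (a(i := f b)) * (\<Prod>k\<in>-{i}. p k (a k)))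
        = (\<Sum>a\<in>{a\<in>joint A. a i = f b}. g a * (\<Prod>k\<in>-{i}. p k (a k)))"
    proof (rule sum.reindex_bij_witness[where i = "\<lambda>a. a(i := b)" and j = "\<lambda>a. a(i := f b)"])
      fix a assume "a \<in> {a\<in>joint A. a i = b}"
      then show "a(i := f b) \<in> {a\<in>joint A. a i = f b}" using phi[OF b] by (auto simp: joint_def)
    next
      fix a assume "a \<in> {a\<in>joint A. a i = f b}"
      then show "a(i := b) \<in> {a\<in>joint A. a i = b}" using b by (auto simp: joint_def)
    next
      fix a assume "a \<in> {a\<in>joint A. a i = b}"
      then show "g (a(i := f b)) * (\<Prod>k\<in>-{i}. p k ((a(i := f b)) k)) = g (a(i := f b)) * (\<Prod>k\<in>-{i}. p k (a k))"
        by (auto intro!: prod.cong)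
    qed auto
    finally show "(\<Sum>a\<in>{a\<in>joint A. a i = b}. (\<Prod>k\<in>UNIV. p k (a k)) * g (a(i := f (a i))))
       = p i b * (\<Sum>a\<in>{a\<in>joint A. a i = f b}. g a * (\<Prod>k\<in>-{i}. p k (a k)))" .
  qed
  finally show ?thesis .
qed

lemma Vbar_step:
  assumes "h \<le> H"
  shows "Vbar A r P H pol dev i h t s =
     (\<Sum>\<tau>\<in>{1..t}. alphaw H t \<tau> *
        (\<Sum>a\<in>joint A. (\<Prod>k\<in>UNIV. pol \<tau> h k s (a k)) *
           (r h i s (dev h s a) +
            (\<Sum>s'\<in>UNIV. pmf (P h s (dev h s a)) s' * Vbar A r P H pol dev i (Suc h) \<tau> s'))))"
proof -
  have "Suc H - h = Suc (H - h)" "Suc H - Suc h = H - h" using assms by auto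
  then show ?thesis unfolding Vbar_def by simp
qed

lemma Vbar_last: "Vbar A r P H pol dev i (Suc H) t s = 0"
  unfolding Vbar_def by simp

lemma sum_pmf_1: "(\<Sum>s'\<in>(UNIV::'s::finite set). pmf p s') = 1"
  by (rule sum_pmf_eq_1) auto

lemma vaux_bound:
  fixes A :: "'i::finite \<Rightarrow> 'a set" and P :: "nat \<Rightarrow> 's::finite \<Rightarrow> ('i \<Rightarrow> 'a) \<Rightarrow> 's pmf"
  assumes fin: "\<And>i. finite (A i)"
    and rr: "\<And>h i s a. a \<in> joint A \<Longrightarrow> 0 \<le> r h i s a \<and> r h i s a \<le> 1"
    and pd: "\<And>t h k s. \<lbrakk>1 \<le> t; t \<le> T; 1 \<le> h; h \<le> H\<rbrakk> \<Longrightarrow> isdist (A k) (pol t h k s)"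
    and dv: "\<And>h s a. a \<in> joint A \<Longrightarrow> dev h s a \<in> joint A"
  shows "1 \<le> h \<Longrightarrow> h + n \<le> Suc H \<Longrightarrow> \<tau> \<le> T \<Longrightarrow>
     0 \<le> vaux A r P H pol dev i n h \<tau> s \<and> vaux A r P H pol dev i n h \<tau> s \<le> real n"
proof (induction n arbitrary: h \<tau> s)
  case 0 then show ?case by simp
next
  case (Suc n)
  define X where "X \<tau>' a = r h i s (dev h s a) +
            (\<Sum>s'\<in>UNIV. pmf (P h s (dev h s a)) s' * vaux A r P H pol dev i n (Suc h) \<tau>' s')" for \<tau>' a
  have X: "0 \<le> X \<tau>' a \<and> X \<tau>' a \<le> 1 + real n" if "\<tau>' \<in> {1..\<tau>}" "a \<in> joint A" for \<tau>' a
  proof -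
    have v: "0 \<le> vaux A r P H pol dev i n (Suc h) \<tau>' s' \<and> vaux A r P H pol dev i n (Suc h) \<tau>' s' \<le> real n" for s'
      using Suc.IH[of "Suc h" \<tau>' s'] Suc.prems that by auto
    have "(\<Sum>s'\<in>UNIV. pmf (P h s (dev h s a)) s' * vaux A r P H pol dev i n (Suc h) \<tau>' s')
        \<le> (\<Sum>s'\<in>UNIV. pmf (P h s (dev h s a)) s' * real n)"
      by (intro sum_mono mult_left_mono) (use v in auto)
    also have "\<dots> = real n" by (simp add: sum_distrib_right[symmetric] sum_pmf_1)
    finally have u: "(\<Sum>s'\<in>UNIV. pmf (P h s (dev h s a)) s' * vaux A r P H pol dev i n (Suc h) \<tau>' s') \<le> real n" .
    have l: "0 \<le> (\<Sum>s'\<in>UNIV. pmf (P h s (dev h s a)) s' * vaux A r P H pol dev i n (Suc h) \<tau>' s')"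
      by (intro sum_nonneg mult_nonneg_nonneg) (use v in auto)
    have "0 \<le> r h i s (dev h s a) \<and> r h i s (dev h s a) \<le> 1" using rr dv that(2) by blast
    then show ?thesis using u l unfolding X_def by auto
  qed
  define Y where "Y \<tau>' = (\<Sum>a\<in>joint A. (\<Prod>k\<in>UNIV. pol \<tau>' h k s (a k)) * X \<tau>' a)" for \<tau>'
  have Y: "0 \<le> Y \<tau>' \<and> Y \<tau>' \<le> 1 + real n" if t': "\<tau>' \<in> {1..\<tau>}" for \<tau>'
  proof -
    have pdk: "\<And>k. isdist (A k) (pol \<tau>' h k s)" using pd Suc.prems t' by auto
    have "Y \<tau>' \<le> (\<Sum>a\<in>joint A. (\<Prod>k\<in>UNIV. pol \<tau>' h k s (a k)) * (1 + real n))"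
      unfolding Y_def by (intro sum_mono mult_left_mono) (use X[OF t'] prod_joint_nonneg[OF pdk] in auto)
    also have "\<dots> = 1 + real n" by (simp add: sum_distrib_right[symmetric] sum_prod_joint_1[OF fin pdk])
    moreover have "0 \<le> Y \<tau>'" unfolding Y_def
      using X[OF t'] prod_joint_nonneg[OF pdk] by (intro sum_nonneg mult_nonneg_nonneg) auto
    ultimately show ?thesis by simp
  qed
  have eq: "vaux A r P H pol dev i (Suc n) h \<tau> s = (\<Sum>\<tau>'\<in>{1..\<tau>}. alphaw H \<tau> \<tau>' * Y \<tau>')"
    unfolding Y_def X_def by simp
  have "(\<Sum>\<tau>'\<in>{1..\<tau>}. alphaw H \<tau> \<tau>' * Y \<tau>') \<le> (\<Sum>\<tau>'\<in>{1..\<tau>}. alphaw H \<tau> \<tau>' * (1 + real n))"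
    by (intro sum_mono mult_left_mono) (use Y alphaw_nonneg in auto)
  also have "\<dots> \<le> 1 + real n"
  proof (cases "\<tau> = 0")
    case False then show ?thesis using alphaw_sum[of \<tau> H] by (simp add: sum_distrib_right[symmetric])
  qed simp
  finally show ?case using eq
    by (auto intro!: sum_nonneg mult_nonneg_nonneg alphaw_nonneg simp: Y)
qed



theorem lemma1:
  fixes A :: "'i::finite \<Rightarrow> 'a set"
    and r :: "nat \<Rightarrow> 'i \<Rightarrow> 's::finite \<Rightarrow> ('i \<Rightarrow> 'a) \<Rightarrow> real"
    and P :: "nat \<Rightarrow> 's \<Rightarrow> ('i \<Rightarrow> 'a) \<Rightarrow> 's pmf"
    and H T :: nat and eta :: real
    and pol :: "nat \<Rightarrow> nat \<Rightarrow> 'i \<Rightarrow> 's \<Rightarrow> 'a \<Rightarrow> real"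
    and Q :: "nat \<Rightarrow> nat \<Rightarrow> 'i \<Rightarrow> 's \<Rightarrow> ('i \<Rightarrow> 'a) \<Rightarrow> real"
    and q :: "nat \<Rightarrow> nat \<Rightarrow> 'i \<Rightarrow> 's \<Rightarrow> 'a \<Rightarrow> 'a \<Rightarrow> real"
  assumes A_fin: "\<And>i. finite (A i)" and A_ne: "\<And>i. A i \<noteq> {}"
    and r_range: "\<And>h i s a. a \<in> joint A \<Longrightarrow> 0 \<le> r h i s a \<and> r h i s a \<le> 1"
    and eta_pos: "eta > 0"
    and Q0: "\<And>h i s a. a \<in> joint A \<Longrightarrow> Q 0 h i s a = 0"
    and pol0: "\<And>h i s b. pol 0 h i s b = (if b \<in> A i then 1 / real (card (A i)) else 0)"
    and QH1: "\<And>t i s a. a \<in> joint A \<Longrightarrow> Q t (Suc H) i s a = 0"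
    and q_argmax: "\<And>t h i s b. \<lbrakk>1 \<le> t; t \<le> T; 1 \<le> h; h \<le> H; b \<in> A i\<rbrakk> \<Longrightarrow>
        posdist (A i) (q t h i s b) \<and>
        (\<forall>x. posdist (A i) x \<longrightarrow>
           ftrl_obj (A i) eta (wgt H t t) (loss A H pol Q t h i s b) x
           \<le> ftrl_obj (A i) eta (wgt H t t) (loss A H pol Q t h i s b) (q t h i s b))"
    and pol_fix: "\<And>t h i s. \<lbrakk>1 \<le> t; t \<le> T; 1 \<le> h; h \<le> H\<rbrakk> \<Longrightarrow>
        isdist (A i) (pol t h i s) \<and>
        (\<forall>b'\<in>A i. pol t h i s b' = (\<Sum>b\<in>A i. pol t h i s b * q t h i s b b'))"
    and Q_upd: "\<And>t h i s a. \<lbrakk>1 \<le> t; t \<le> T; 1 \<le> h; h \<le> H; a \<in> joint A\<rbrakk> \<Longrightarrow>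
        Q t h i s a = (1 - alpha H t) * Q (t - 1) h i s a
          + alpha H t * (r h i s a + (\<Sum>s'\<in>UNIV. pmf (P h s a) s' * fullQ A pol Q t (Suc h) i s'))"
    and h_rng: "1 \<le> h" "h \<le> H" and t_rng: "1 \<le> t" "t \<le> T"
  shows "delta A r P H pol h t
           \<le> (\<Sum>j\<in>{1..t}. alphaw H t j * delta A r P H pol (Suc h) j) + swapreg A H pol Q h t"
proof -
  have pd: "isdist (A k) (pol t h k s)" if "1 \<le> t" "t \<le> T" "1 \<le> h" "h \<le> H" for t h k s
    using pol_fix that by blast
  have Qform: "Q t h i s a = r h i s a + (\<Sum>s'\<in>UNIV. pmf (P h s a) s' *
                 (\<Sum>m\<in>{1..t}. alphaw H t m * fullQ A pol Q m (Suc h) i s'))"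
    if "1 \<le> t" "t \<le> T" "1 \<le> h" "h \<le> H" "a \<in> joint A" for t h i s a
    using that
  proof (induction t)
    case 0 then show ?case by simp
  next
    case (Suc t)
    define F where "F m s' = fullQ A pol Q m (Suc h) i s'" for m s'
    define al where "al = alpha H (Suc t)"
    have up: "Q (Suc t) h i s a = (1 - al) * Q t h i s a + al * (r h i s a + (\<Sum>s'\<in>UNIV. pmf (P h s a) s' * F (Suc t) s'))"
      using Q_upd[of "Suc t" h a i s] Suc.prems unfolding F_def al_def by simp
    show ?case
    proof (cases "t = 0")
      case True
      then show ?thesis using up alpha_1[of H] alphaw_diag[of H 1] unfolding al_def F_def by simp
    next
      case False
      have IH: "Q t h i s a = r h i s a + (\<Sum>s'\<in>UNIV. pmf (P h s a) s' * (\<Sum>m\<in>{1..t}. alphaw H t m * F m s'))"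
        using Suc False unfolding F_def by simp
      have split: "(\<Sum>m\<in>{1..Suc t}. alphaw H (Suc t) m * F m s') = (1 - al) * (\<Sum>m\<in>{1..t}. alphaw H t m * F m s') + al * F (Suc t) s'" for s'
        by (simp add: sum.cl_ivl_Suc alphaw_Suc alphaw_diag sum_distrib_left al_def mult.assoc)
      have "Q (Suc t) h i s a = r h i s a + (\<Sum>s'\<in>UNIV. pmf (P h s a) s' * ((1 - al) * (\<Sum>m\<in>{1..t}. alphaw H t m * F m s') + al * F (Suc t) s'))"
        unfolding up IH by (simp add: algebra_simps sum.distrib sum_distrib_left)
      then show ?thesis using split unfolding F_def by simp
    qed
  qed
  have fullQ_last: "fullQ A pol Q m (Suc H) i s = 0" for m i s
    unfolding fullQ_def using QH1 by simp
  have VW0: "1 \<le> h' \<longrightarrow> (\<forall>\<tau> s. 1 \<le> \<tau> \<longrightarrow> \<tau> \<le> T \<longrightarrow>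
      Vbar A r P H pol (\<lambda>h s a. a) i h' \<tau> s = (\<Sum>m\<in>{1..\<tau>}. alphaw H \<tau> m * fullQ A pol Q m h' i s))"
    if "h' \<le> Suc H" for h' i
    using that
  proof (induction h' rule: inc_induct)
    case base
    then show ?case by (simp add: Vbar_last fullQ_last)
  next
    case (step n)
    show ?case
    proof (intro impI allI)
      fix \<tau> s assume n1: "1 \<le> n" and t1: "1 \<le> \<tau>" and tT: "\<tau> \<le> T"
      have "Vbar A r P H pol (\<lambda>h s a. a) i n \<tau> s =
         (\<Sum>\<tau>'\<in>{1..\<tau>}. alphaw H \<tau> \<tau>' *
            (\<Sum>a\<in>joint A. (\<Prod>k\<in>UNIV. pol \<tau>' n k s (a k)) *
               (r n i s a + (\<Sum>s'\<in>UNIV. pmf (P n s a) s' * Vbar A r P H pol (\<lambda>h s a. a) i (Suc n) \<tau>' s'))))"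
        using Vbar_step[of n H A r P pol "\<lambda>h s a. a" i \<tau> s] step.hyps by simp
      also have "\<dots> = (\<Sum>\<tau>'\<in>{1..\<tau>}. alphaw H \<tau> \<tau>' *
            (\<Sum>a\<in>joint A. (\<Prod>k\<in>UNIV. pol \<tau>' n k s (a k)) * Q \<tau>' n i s a))"
      proof (intro sum.cong refl arg_cong2[where f = "(*)"])
        fix \<tau>' a assume t': "\<tau>' \<in> {1..\<tau>}" and a: "a \<in> joint A"
        show "r n i s a + (\<Sum>s'\<in>UNIV. pmf (P n s a) s' * Vbar A r P H pol (\<lambda>h s a. a) i (Suc n) \<tau>' s') = Q \<tau>' n i s a"
          using Qform[of \<tau>' n a i s] step.IH step.hyps t' tT a n1 by simp
      qed
      also have "\<dots> = (\<Sum>m\<in>{1..\<tau>}. alphaw H \<tau> m * fullQ A pol Q m n i s)"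
        unfolding fullQ_def by (simp add: mult.commute)
      finally show "Vbar A r P H pol (\<lambda>h s a. a) i n \<tau> s = (\<Sum>m\<in>{1..\<tau>}. alphaw H \<tau> m * fullQ A pol Q m n i s)" .
    qed
  qed
  have QV: "Q \<tau> h' i s a = r h' i s a + (\<Sum>s'\<in>UNIV. pmf (P h' s a) s' * Vbar A r P H pol (\<lambda>h s a. a) i (Suc h') \<tau> s')"
    if "1 \<le> \<tau>" "\<tau> \<le> T" "1 \<le> h'" "h' \<le> H" "a \<in> joint A" for \<tau> h' i s a
    using Qform[OF that] VW0[of "Suc h'" i] that by simp
  have Vb: "0 \<le> Vbar A r P H pol dev i h' \<tau> s' \<and> Vbar A r P H pol dev i h' \<tau> s' \<le> real H"
    if "1 \<le> h'" "h' \<le> Suc H" "\<tau> \<le> T" "\<And>h s a. a \<in> joint A \<Longrightarrow> dev h s a \<in> joint A" for dev i h' \<tau> s'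
  proof -
    have "0 \<le> vaux A r P H pol dev i (Suc H - h') h' \<tau> s' \<and> vaux A r P H pol dev i (Suc H - h') h' \<tau> s' \<le> real (Suc H - h')"
      by (rule vaux_bound[OF A_fin r_range pd]) (use that in auto)
    then show ?thesis unfolding Vbar_def using that by auto
  qed
  have modif_joint: "modif i phi h' s' a \<in> joint A"
    if "a \<in> joint A" "\<forall>x y b. b \<in> A i \<longrightarrow> phi x y b \<in> A i" for i and phi :: "nat \<Rightarrow> 's \<Rightarrow> 'a \<Rightarrow> 'a" and h' s' a
    using that unfolding modif_def joint_def by auto
  have del_up: "Vbar A r P H pol (modif i phi) i (Suc h) \<tau> s' - Vbar A r P H pol (\<lambda>h s a. a) i (Suc h) \<tau> s'
      \<le> delta A r P H pol (Suc h) \<tau>"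
    if pres: "\<forall>x y b. b \<in> A i \<longrightarrow> phi x y b \<in> A i" and tT: "\<tau> \<le> T" for i and phi :: "nat \<Rightarrow> 's \<Rightarrow> 'a \<Rightarrow> 'a" and \<tau> s'
    unfolding delta_def
  proof (rule cSup_upper)
    show "bdd_above {Vbar A r P H pol (modif i phi) i (Suc h) \<tau> s - Vbar A r P H pol (\<lambda>h s a. a) i (Suc h) \<tau> s |i phi s.
        \<forall>h' s' b. b \<in> A i \<longrightarrow> phi h' s' b \<in> A i}"
    proof (rule bdd_aboveI[where M = "real H"], clarify)
      fix i and phi :: "nat \<Rightarrow> 's \<Rightarrow> 'a \<Rightarrow> 'a" and s assume pr: "\<forall>h' s' b. b \<in> A i \<longrightarrow> phi h' s' b \<in> A i"
      have "Vbar A r P H pol (modif i phi) i (Suc h) \<tau> s \<le> real H"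
        using Vb[of "Suc h" \<tau> "modif i phi" i s] h_rng tT modif_joint[OF _ pr] by auto
      moreover have "0 \<le> Vbar A r P H pol (\<lambda>h s a. a) i (Suc h) \<tau> s"
        using Vb[of "Suc h" \<tau> "\<lambda>h s a. a" i s] h_rng tT by auto
      ultimately show "Vbar A r P H pol (modif i phi) i (Suc h) \<tau> s - Vbar A r P H pol (\<lambda>h s a. a) i (Suc h) \<tau> s \<le> real H"
        by simp
    qed
  qed (use pres in blast)
  define SR where "SR i s phi = (\<Sum>j\<in>{1..t}. alphaw H t j *
            (\<Sum>b\<in>A i. pol j h i s b * (margQ A pol Q j h i s (phi b) - margQ A pol Q j h i s b)))" for i s phi
  have sr_up: "SR i s phi \<le> swapreg A H pol Q h t" if pres: "\<forall>b\<in>A i. phi b \<in> A i" for i s phi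
  proof -
    have "SR i s phi \<le> swapreg_i A H pol Q h t i s"
      unfolding swapreg_i_def SR_def[symmetric]
    proof (rule cSup_upper)
      have "{SR i s phi |phi. \<forall>b\<in>A i. phi b \<in> A i} \<subseteq> (SR i s) ` (A i \<rightarrow>\<^sub>E A i)"
      proof clarify
        fix phi assume pr: "\<forall>b\<in>A i. phi b \<in> A i"
        have "SR i s phi = SR i s (restrict phi (A i))" unfolding SR_def
          by (intro sum.cong refl arg_cong2[where f = "(*)"] arg_cong2[where f = "(-)"]) auto
        moreover have "restrict phi (A i) \<in> A i \<rightarrow>\<^sub>E A i" using pr by auto
        ultimately show "SR i s phi \<in> SR i s ` (A i \<rightarrow>\<^sub>E A i)" by blast
      qed
      moreover have "finite ((SR i s) ` (A i \<rightarrow>\<^sub>E A i))" using A_fin by (intro finite_imageI finite_PiE) auto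
      ultimately show "bdd_above {SR i s phi |phi. \<forall>b\<in>A i. phi b \<in> A i}"
        by (intro bdd_above_finite) (rule finite_subset)
    qed (use pres in blast)
    also have "\<dots> \<le> swapreg A H pol Q h t"
      unfolding swapreg_def
    proof (rule cSup_upper)
      have "{swapreg_i A H pol Q h t i s |i s. True} = (\<lambda>(i, s). swapreg_i A H pol Q h t i s) ` UNIV" by auto
      then show "bdd_above {swapreg_i A H pol Q h t i s |i s. True}" by (simp add: bdd_above_finite)
    qed blast
    finally show ?thesis .
  qed
  define RHS where "RHS = (\<Sum>j\<in>{1..t}. alphaw H t j * delta A r P H pol (Suc h) j) + swapreg A H pol Q h t"
  define S where "S = {Vbar A r P H pol (modif i phi) i h t s - Vbar A r P H pol (\<lambda>h s a. a) i h t s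
          | i phi s. \<forall>h' s' b. b \<in> A i \<longrightarrow> phi h' s' b \<in> A i}"
  have "Sup S \<le> RHS"
  proof (rule cSup_least)
    have "Vbar A r P H pol (modif undefined (\<lambda>_ _ b. b)) undefined h t undefined
        - Vbar A r P H pol (\<lambda>h s a. a) undefined h t undefined \<in> S" unfolding S_def by blast
    then show "S \<noteq> {}" by blast
  next
    fix x assume "x \<in> S"
    then obtain i and phi :: "nat \<Rightarrow> 's \<Rightarrow> 'a \<Rightarrow> 'a" and s0 where
      x: "x = Vbar A r P H pol (modif i phi) i h t s0 - Vbar A r P H pol (\<lambda>h s a. a) i h t s0"
      and pres: "\<forall>h' s' b. b \<in> A i \<longrightarrow> phi h' s' b \<in> A i" unfolding S_def by blast
    define D where "D = modif i phi"
    define E where "E \<tau> a = (\<Prod>k\<in>UNIV. pol \<tau> h k s0 (a k))" for \<tau> a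
    define dl where "dl \<tau> = delta A r P H pol (Suc h) \<tau>" for \<tau>
    have Dj: "a \<in> joint A \<Longrightarrow> D h s0 a \<in> joint A" for a unfolding D_def using modif_joint pres by blast
    have pdt: "isdist (A k) (pol \<tau> h k s0)" if "\<tau> \<in> {1..t}" for \<tau> k using pd that t_rng h_rng by auto
    have E0: "0 \<le> E \<tau> a" if "\<tau> \<in> {1..t}" "a \<in> joint A" for \<tau> a
      unfolding E_def using prod_joint_nonneg[OF pdt[OF that(1)] that(2)] .
    have E1: "(\<Sum>a\<in>joint A. E \<tau> a) = 1" if "\<tau> \<in> {1..t}" for \<tau>
      unfolding E_def using sum_prod_joint_1[OF A_fin pdt[OF that]] .
    have "Vbar A r P H pol D i h t s0 = (\<Sum>\<tau>\<in>{1..t}. alphaw H t \<tau> *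
        (\<Sum>a\<in>joint A. E \<tau> a * (r h i s0 (D h s0 a) +
            (\<Sum>s'\<in>UNIV. pmf (P h s0 (D h s0 a)) s' * Vbar A r P H pol D i (Suc h) \<tau> s'))))"
      unfolding E_def using Vbar_step[of h H] h_rng by simp
    also have "\<dots> \<le> (\<Sum>\<tau>\<in>{1..t}. alphaw H t \<tau> *
        (\<Sum>a\<in>joint A. E \<tau> a * (Q \<tau> h i s0 (D h s0 a) + dl \<tau>)))"
    proof (intro sum_mono mult_left_mono alphaw_nonneg)
      fix \<tau> a assume t': "\<tau> \<in> {1..t}" and a: "a \<in> joint A"
      have "(\<Sum>s'\<in>UNIV. pmf (P h s0 (D h s0 a)) s' * Vbar A r P H pol D i (Suc h) \<tau> s')
          \<le> (\<Sum>s'\<in>UNIV. pmf (P h s0 (D h s0 a)) s' * (Vbar A r P H pol (\<lambda>h s a. a) i (Suc h) \<tau> s' + dl \<tau>))"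
        using del_up[OF pres, of \<tau>] t' t_rng unfolding D_def dl_def
        by (intro sum_mono mult_left_mono) (auto simp: algebra_simps)
      also have "\<dots> = (\<Sum>s'\<in>UNIV. pmf (P h s0 (D h s0 a)) s' * Vbar A r P H pol (\<lambda>h s a. a) i (Suc h) \<tau> s') + dl \<tau>"
        by (simp add: algebra_simps sum.distrib sum_distrib_left[symmetric] sum_pmf_1)
      finally show "r h i s0 (D h s0 a) + (\<Sum>s'\<in>UNIV. pmf (P h s0 (D h s0 a)) s' * Vbar A r P H pol D i (Suc h) \<tau> s')
          \<le> Q \<tau> h i s0 (D h s0 a) + dl \<tau>"
        using QV[of \<tau> h "D h s0 a" i s0] t' t_rng h_rng Dj[OF a] by simp
    qed (use E0 in auto)
    also have "\<dots> = (\<Sum>\<tau>\<in>{1..t}. alphaw H t \<tau> * (\<Sum>a\<in>joint A. E \<tau> a * Q \<tau> h i s0 (D h s0 a)))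
        + (\<Sum>\<tau>\<in>{1..t}. alphaw H t \<tau> * dl \<tau>)"
    proof -
      have "(\<Sum>a\<in>joint A. E \<tau> a * (Q \<tau> h i s0 (D h s0 a) + dl \<tau>)) =
          (\<Sum>a\<in>joint A. E \<tau> a * Q \<tau> h i s0 (D h s0 a)) + dl \<tau>" if "\<tau> \<in> {1..t}" for \<tau>
        using E1[OF that] by (simp add: algebra_simps sum.distrib sum_distrib_left[symmetric])
      then show ?thesis by (simp add: algebra_simps sum.distrib)
    qed
    finally have up: "Vbar A r P H pol D i h t s0 \<le> (\<Sum>\<tau>\<in>{1..t}. alphaw H t \<tau> * (\<Sum>a\<in>joint A. E \<tau> a * Q \<tau> h i s0 (D h s0 a)))
        + (\<Sum>\<tau>\<in>{1..t}. alphaw H t \<tau> * dl \<tau>)" .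
    have base: "Vbar A r P H pol (\<lambda>h s a. a) i h t s0 = (\<Sum>\<tau>\<in>{1..t}. alphaw H t \<tau> * (\<Sum>a\<in>joint A. E \<tau> a * Q \<tau> h i s0 a))"
    proof -
      have "Vbar A r P H pol (\<lambda>h s a. a) i h t s0 = (\<Sum>\<tau>\<in>{1..t}. alphaw H t \<tau> *
        (\<Sum>a\<in>joint A. E \<tau> a * (r h i s0 a +
            (\<Sum>s'\<in>UNIV. pmf (P h s0 a) s' * Vbar A r P H pol (\<lambda>h s a. a) i (Suc h) \<tau> s'))))"
        unfolding E_def using Vbar_step[of h H] h_rng by simp
      also have "\<dots> = (\<Sum>\<tau>\<in>{1..t}. alphaw H t \<tau> * (\<Sum>a\<in>joint A. E \<tau> a * Q \<tau> h i s0 a))"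
        using QV t_rng h_rng by (intro sum.cong refl arg_cong2[where f = "(*)"]) auto
      finally show ?thesis .
    qed
    have sw1: "(\<Sum>a\<in>joint A. E \<tau> a * Q \<tau> h i s0 (D h s0 a)) = (\<Sum>b\<in>A i. pol \<tau> h i s0 b * margQ A pol Q \<tau> h i s0 (phi h s0 b))" for \<tau>
      unfolding E_def D_def modif_def margQ_def
      by (rule swap_sum[OF A_fin]) (use pres in blast)
    have sw0: "(\<Sum>a\<in>joint A. E \<tau> a * Q \<tau> h i s0 a) = (\<Sum>b\<in>A i. pol \<tau> h i s0 b * margQ A pol Q \<tau> h i s0 b)" for \<tau>
      using swap_sum[OF A_fin, where f = "\<lambda>b. b" and i = i and p = "\<lambda>k b. pol \<tau> h k s0 b" and g = "Q \<tau> h i s0"]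
      unfolding E_def margQ_def by simp
    have "x \<le> (\<Sum>\<tau>\<in>{1..t}. alphaw H t \<tau> * dl \<tau>) + SR i s0 (phi h s0)"
      using up base unfolding x D_def[symmetric] SR_def sw0 sw1
      by (simp add: algebra_simps sum_subtractf sum.distrib)
    also have "\<dots> \<le> RHS" unfolding RHS_def dl_def using sr_up[of i "phi h s0" s0] pres by simp
    finally show "x \<le> RHS" .
  qed
  then show ?thesis unfolding RHS_def S_def delta_def[of A r P H pol h t] .
qed

end
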